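(* Each of the following sequences $(a_n)_{n\ge0}$ has the property that, for every $n\ge0$, the polynomial $\sum_{i=0}^n a_ix^i$ has exactly $n\bmod 2$ real roots counted with multiplicity: $a_n=\binom{n+k}{k}$ for any fixed integer $k\ge 0$; the Catalan numbers $a_n=\frac{1}{n+1}\binom{2n}{n}$; $a_n=\binom{2n}{n}$; $a_n=\binom{2n+1}{n}$; $a_n=n!$; $a_n=(2n-1)!!$; $a_n=(2n)!!$.
   Context: $(2n-1)!!=1\cdot3\cdots(2n-1)$ and $(2n)!!=2\cdot4\cdots(2n)$, with both equal to $1$ for $n=0$. *)

theory Defs
  imports "HOL-Computational_Algebra.Polynomial"
begin

definition partial_poly :: "(nat \<Rightarrow> real) \<Rightarrow> nat \<Rightarrow> real poly" where
  "partial_poly a n = (\<Sum>i\<le>n. monom (a i) i)"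

definition num_real_roots :: "real poly \<Rightarrow> nat" where
  "num_real_roots p = size (proots p)"

definition parity_roots_property :: "(nat \<Rightarrow> real) \<Rightarrow> bool" where
  "parity_roots_property a \<longleftrightarrow> (\<forall>n. num_real_roots (partial_poly a n) = n mod 2)"

(* (2n-1)!! = 1*3*...*(2n-1), (2n)!! = 2*4*...*(2n), both 1 for n = 0 *)
definition odd_dfact :: "nat \<Rightarrow> nat" where
  "odd_dfact n = (\<Prod>i\<in>{1..n}. 2 * i - 1)"

definition even_dfact :: "nat \<Rightarrow> nat" where
  "even_dfact n = (\<Prod>i\<in>{1..n}. 2 * i)"

end

theory Submission imports Defs begin

lemma pp_Suc: "partial_poly a (Suc n) = partial_poly a n + monom (a (Suc n)) (Suc n)"
  by (simp add: partial_poly_def)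

lemma poly_pp: "poly (partial_poly a n) x = (\<Sum>i\<le>n. a i * x^i)"
  by (simp add: partial_poly_def poly_sum poly_monom)

lemma poly_pderiv_pp: "x * poly (pderiv (partial_poly a n)) x = (\<Sum>i\<le>n. real i * a i * x^i)"
proof (induction n)
  case 0 then show ?case by (simp add: partial_poly_def pderiv_monom)
next
  case (Suc n)
  have "x * poly (pderiv (partial_poly a (Suc n))) x
      = x * poly (pderiv (partial_poly a n)) x + x * (real (Suc n) * a (Suc n) * x ^ n)"
    by (simp add: pp_Suc pderiv_add pderiv_monom poly_monom algebra_simps)
  also have "\<dots> = (\<Sum>i\<le>Suc n. real i * a i * x^i)"
    using Suc by (simp add: algebra_simps)
  finally show ?case .
qed

lemma poly_pderiv_pp_Suc: "poly (pderiv (partial_poly a (Suc n))) x = (\<Sum>j\<le>n. real (Suc j) * a (Suc j) * x^j)"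
proof (induction n)
  case 0 then show ?case by (simp add: partial_poly_def pderiv_monom pderiv_add poly_monom)
next
  case (Suc n)
  show ?case
    using Suc by (simp add: pp_Suc[of a "Suc n"] pderiv_add pderiv_monom poly_monom algebra_simps)
qed

lemma poly_pos_nonneg:
  assumes "\<forall>i. a i \<ge> 0" "a 0 > 0" "x \<ge> (0::real)"
  shows "(\<Sum>i\<le>n. a i * x^i) > 0"
proof -
  have "(\<Sum>i\<le>n. a i * x^i) = a 0 * x^0 + (\<Sum>i\<in>{..n}-{0}. a i * x^i)"
    by (subst sum.remove[of _ 0]) auto
  moreover have "(\<Sum>i\<in>{..n}-{0}. a i * x^i) \<ge> 0"
    using assms by (intro sum_nonneg) auto
  ultimately show ?thesis using assms by simp
qed

lemma no_roots:
  assumes "p \<noteq> 0" "\<forall>x. poly p x \<noteq> 0"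
  shows "num_real_roots p = 0"
proof -
  have "proots p = {#}"
    by (rule multiset_eqI) (use assms order_root in auto)
  then show ?thesis by (simp add: num_real_roots_def)
qed


lemma no_two_roots:
  fixes p :: "real poly"
  assumes d: "\<forall>x. poly p x = 0 \<longrightarrow> poly (pderiv p) x > 0"
    and p0: "p \<noteq> 0" and r1: "poly p x1 = 0" and r2: "poly p x2 = 0" and lt: "x1 < x2"
  shows False
proof -
  define R where "R = {x. poly p x = 0 \<and> x1 < x \<and> x \<le> x2}"
  have fin: "finite R" unfolding R_def
    by (rule finite_subset[OF _ poly_roots_finite[OF p0]]) auto
  have ne: "x2 \<in> R" using r2 lt by (simp add: R_def)
  define x3 where "x3 = Min R"
  have x3R: "x3 \<in> R" unfolding x3_def using fin ne by (intro Min_in) auto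
  have x3min: "\<And>y. y \<in> R \<Longrightarrow> x3 \<le> y" unfolding x3_def using fin by auto
  have r3: "poly p x3 = 0" and l3: "x1 < x3" using x3R by (auto simp: R_def)
  have l3': "x3 \<le> x2" using x3R by (auto simp: R_def)
  obtain d1 where d1: "d1 > 0" "\<forall>h>0. h < d1 \<longrightarrow> poly p x1 < poly p (x1 + h)"
    using DERIV_pos_inc_right[OF poly_DERIV d[rule_format, OF r1]] by blast
  define h1 where "h1 = min d1 (x3 - x1) / 2"
  have h1: "h1 > 0" "h1 < d1" "h1 < x3 - x1" using d1 l3 unfolding h1_def by auto
  define y where "y = x1 + h1"
  have y: "x1 < y" "y < x3" "poly p y > 0"
    using d1 h1 r1 unfolding y_def by auto
  obtain d2 where d2: "d2 > 0" "\<forall>h>0. h < d2 \<longrightarrow> poly p (x3 - h) < poly p x3"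
    using DERIV_pos_inc_left[OF poly_DERIV d[rule_format, OF r3]] by blast
  define h2 where "h2 = min d2 (x3 - y) / 2"
  have h2: "h2 > 0" "h2 < d2" "h2 < x3 - y" using d2 y unfolding h2_def by auto
  define z where "z = x3 - h2"
  have z: "y < z" "z < x3" "poly p z < 0"
    using d2 h2 r3 unfolding z_def by auto
  obtain w where w: "y < w" "w < z" "poly p w = 0"
    using poly_IVT_neg[OF z(1) y(3) z(3)] by blast
  have "w \<in> R" using w y z l3' by (auto simp: R_def)
  then have "x3 \<le> w" by (rule x3min)
  then show False using w z by simp
qed

lemma one_root:
  fixes p :: "real poly"
  assumes neg: "poly p a < 0" and pos: "poly p b > 0"
    and d: "\<forall>x. poly p x = 0 \<longrightarrow> poly (pderiv p) x > 0"
  shows "num_real_roots p = 1"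
proof -
  have p0: "p \<noteq> 0" using pos by auto
  obtain x0 where x0: "poly p x0 = 0"
  proof (cases "a < b")
    case True then show ?thesis using poly_IVT_pos[OF True neg pos] that by blast
  next
    case False
    then have "b < a" using neg pos by (cases "a = b") auto
    then show ?thesis using poly_IVT_neg[OF _ pos neg] that by blast
  qed
  have uniq: "\<And>y. poly p y = 0 \<Longrightarrow> y = x0"
  proof -
    fix y assume y: "poly p y = 0"
    show "y = x0"
    proof (rule ccontr)
      assume "y \<noteq> x0"
      then have "y < x0 \<or> x0 < y" by auto
      then show False
        using no_two_roots[OF d p0 y x0] no_two_roots[OF d p0 x0 y] by blast
    qed
  qed
  have pdx: "poly (pderiv p) x0 \<noteq> 0" using d x0 by force
  have "order x0 (pderiv p) = 0"
    using pdx order_root[of "pderiv p" x0] by blast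
  then have o1: "order x0 p = 1" using order_pderiv[OF p0 x0] by simp
  have "proots p = {#x0#}"
  proof (rule multiset_eqI)
    fix x show "count (proots p) x = count {#x0#} x"
    proof (cases "x = x0")
      case True then show ?thesis using o1 p0 by simp
    next
      case False
      then have "poly p x \<noteq> 0" using uniq by blast
      then have "order x p = 0" using order_root[of p x] by blast
      then show ?thesis using False p0 by simp
    qed
  qed
  then show ?thesis by (simp add: num_real_roots_def)
qed


lemma valley_exists:
  fixes c :: "nat \<Rightarrow> real"
  assumes pos: "\<forall>i. c i > 0" and lc: "\<forall>i. (c (Suc i))^2 \<le> c i * c (Suc (Suc i))"
  shows "\<exists>m\<le>n. (\<forall>i<m. c (Suc i) \<le> c i) \<and> (\<forall>i. m \<le> i \<and> i < n \<longrightarrow> c i \<le> c (Suc i))"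
proof (cases "\<exists>i<n. c i \<le> c (Suc i)")
  case False
  then show ?thesis by (intro exI[of _ n]) auto
next
  case True
  define m where "m = (LEAST i. i < n \<and> c i \<le> c (Suc i))"
  have m: "m < n" "c m \<le> c (Suc m)"
    using LeastI_ex[OF True[simplified Bex_def[symmetric]]] unfolding m_def by auto
  have below: "\<forall>i<m. c (Suc i) \<le> c i"
  proof (intro allI impI)
    fix i assume "i < m"
    then have "\<not> (i < n \<and> c i \<le> c (Suc i))" unfolding m_def using not_less_Least by blast
    then show "c (Suc i) \<le> c i" using \<open>i < m\<close> m by auto
  qed
  have step: "\<And>i. c i \<le> c (Suc i) \<Longrightarrow> c (Suc i) \<le> c (Suc (Suc i))"
  proof -
    fix i assume h: "c i \<le> c (Suc i)"
    have "c (Suc i) * c (Suc i) \<le> c i * c (Suc (Suc i))" using lc by (simp add: power2_eq_square)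
    also have "\<dots> \<le> c (Suc i) * c (Suc (Suc i))"
      using h pos by (intro mult_right_mono) (auto intro: less_imp_le)
    finally show "c (Suc i) \<le> c (Suc (Suc i))"
      using pos by (meson mult_le_cancel_left_pos)
  qed
  have above: "\<And>j. c (m + j) \<le> c (Suc (m + j))"
  proof -
    fix j show "c (m + j) \<le> c (Suc (m + j))"
      by (induction j) (use m step in auto)
  qed
  show ?thesis
  proof (intro exI[of _ m] conjI allI impI)
    show "m \<le> n" using m by simp
    show "\<And>i. i < m \<Longrightarrow> c (Suc i) \<le> c i" using below by blast
    fix i assume "m \<le> i \<and> i < n"
    then obtain j where "i = m + j" using le_Suc_ex by blast
    then show "c i \<le> c (Suc i)" using above by simp
  qed
qed

lemma alt_base: "(\<Sum>i\<le>2*k. (-1)^i * c i) = (\<Sum>j<k. c (2*j) - c (2*j+1)) + (c (2*k) :: real)"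
proof (induction k)
  case 0 then show ?case by simp
next
  case (Suc k)
  have e: "2 * Suc k = Suc (Suc (2*k))" by simp
  show ?case unfolding e using Suc by (simp add: algebra_simps)
qed

lemma alt_split:
  assumes "p \<le> k"
  shows "(\<Sum>i\<le>2*k. (-1)^i * c i) = (\<Sum>j<p. c (2*j) - c (2*j+1)) + c (2*p)
           + (\<Sum>j\<in>{p..<k}. c (2*j+2) - (c (2*j+1) :: real))"
  using assms
proof (induction k)
  case 0 then show ?case using alt_base[where k=0 and c=c] by simp
next
  case (Suc k)
  show ?case
  proof (cases "p = Suc k")
    case True then show ?thesis using alt_base[where k="Suc k" and c=c] by simp
  next
    case False
    then have pk: "p \<le> k" using Suc.prems by simp
    have e: "2 * Suc k = Suc (Suc (2*k))" by simp
    have "(\<Sum>i\<le>2*Suc k. (-1)^i * c i) = (\<Sum>i\<le>2*k. (-1)^i * c i) - c (2*k+1) + c (2*k+2)"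
      unfolding e by simp
    also have "\<dots> = (\<Sum>j<p. c (2*j) - c (2*j+1)) + c (2*p)
           + (\<Sum>j\<in>{p..<Suc k}. c (2*j+2) - (c (2*j+1) :: real))"
      using Suc.IH[OF pk] pk by (simp add: algebra_simps)
    finally show ?thesis .
  qed
qed

lemma alt_even:
  fixes c :: "nat \<Rightarrow> real"
  assumes pos: "\<forall>i. c i > 0" and mn: "m \<le> 2*k"
    and below: "\<forall>i<m. c (Suc i) \<le> c i" and above: "\<forall>i. m \<le> i \<and> i < 2*k \<longrightarrow> c i \<le> c (Suc i)"
  shows "(\<Sum>i\<le>2*k. (-1)^i * c i) > 0"
proof -
  define p where "p = (m + 1) div 2"
  have pk: "p \<le> k" using mn unfolding p_def by simp
  have s1: "(\<Sum>j<p. c (2*j) - c (2*j+1)) \<ge> 0"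
  proof (intro sum_nonneg)
    fix j assume "j \<in> {..<p}"
    then have "2*j < m" unfolding p_def by auto
    then show "c (2*j) - c (2*j+1) \<ge> 0" using below by fastforce
  qed
  have s2: "(\<Sum>j\<in>{p..<k}. c (2*j+2) - c (2*j+1)) \<ge> 0"
  proof (intro sum_nonneg)
    fix j assume "j \<in> {p..<k}"
    then have "m \<le> 2*j+1" "2*j+1 < 2*k" unfolding p_def by auto
    then have "c (2*j+1) \<le> c (Suc (2*j+1))" using above by blast
    then show "c (2*j+2) - c (2*j+1) \<ge> 0" by simp
  qed
  show ?thesis unfolding alt_split[OF pk] using s1 s2 pos by (smt (verit))
qed

lemma alt_odd_pair: "(\<Sum>i\<le>2*k+1. (-1)^i * w i) = (\<Sum>j\<le>k. w (2*j) - (w (2*j+1) :: real))"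
proof (induction k)
  case 0 then show ?case by simp
next
  case (Suc k)
  have e: "2 * Suc k + 1 = Suc (Suc (2*k+1))" by simp
  show ?case unfolding e using Suc by (simp add: algebra_simps)
qed

lemma alt_odd:
  fixes c :: "nat \<Rightarrow> real"
  assumes pos: "\<forall>i. c i > 0" and mn: "m \<le> 2*k+1"
    and below: "\<forall>i<m. c (Suc i) \<le> c i" and above: "\<forall>i. m \<le> i \<and> i < 2*k+1 \<longrightarrow> c i \<le> c (Suc i)"
  shows "(\<Sum>i\<le>2*k+1. (-1)^i * ((real m - real i) * c i)) > 0"
proof -
  have "(\<Sum>j\<le>k. (real m - real (2*j)) * c (2*j) - (real m - real (2*j+1)) * c (2*j+1)) > 0"
  proof (intro sum_pos)
    fix j assume j: "j \<in> {..k}"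
    show "(real m - real (2*j)) * c (2*j) - (real m - real (2*j+1)) * c (2*j+1) > 0"
    proof (cases "2*j < m")
      case True
      then have h: "c (2*j+1) \<le> c (2*j)" using below by fastforce
      have "(real m - real (2*j)) * c (2*j+1) \<le> (real m - real (2*j)) * c (2*j)"
        using True h by (intro mult_left_mono) auto
      then show ?thesis using pos[rule_format, of "2*j+1"] by (simp add: algebra_simps)
    next
      case False
      then have h: "c (2*j) \<le> c (2*j+1)" using above j by fastforce
      have "(real (2*j) - real m) * c (2*j) \<le> (real (2*j) - real m) * c (2*j+1)"
        using False h by (intro mult_left_mono) auto
      then show ?thesis using pos[rule_format, of "2*j+1"] by (simp add: algebra_simps)
    qed
  qed auto
  then show ?thesis unfolding alt_odd_pair .
qed


lemma cauchy_neg: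
  assumes pos: "\<forall>i. a i > 0" and odd: "odd n"
  shows "\<exists>x. poly (partial_poly a n) x < 0"
proof -
  obtain n' where n: "n = Suc n'" using odd by (cases n) auto
  define S where "S = (\<Sum>i\<le>n'. a i)"
  define T where "T = 1 + S / a n"
  have an: "a n > 0" using pos by simp
  have S0: "S \<ge> 0" unfolding S_def using pos by (intro sum_nonneg) (auto intro: less_imp_le)
  have T1: "T \<ge> 1" unfolding T_def using S0 an by simp
  have TS: "a n * (T - 1) = S" unfolding T_def using an by simp
  have b: "(\<Sum>i\<le>n'. a i * (-T)^i) \<le> (\<Sum>i\<le>n'. a i * T^n')"
  proof (intro sum_mono)
    fix i assume i: "i \<in> {..n'}"
    have "(-T)^i \<le> \<bar>(-T)^i\<bar>" by (rule abs_ge_self)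
    also have "\<dots> = T^i" using T1 by (simp add: power_abs)
    also have "\<dots> \<le> T^n'" using T1 i by (intro power_increasing) auto
    finally show "a i * (-T)^i \<le> a i * T^n'" using pos by (intro mult_left_mono) (auto intro: less_imp_le)
  qed
  have "(\<Sum>i\<le>n'. a i * T^n') = S * T^n'" unfolding S_def by (simp add: sum_distrib_right)
  have pw: "(-T)^n = - (T^n)" using odd by (simp add: power_minus_odd)
  have "poly (partial_poly a n) (-T) = (\<Sum>i\<le>n'. a i * (-T)^i) + a n * (-T)^n"
    unfolding poly_pp n by simp
  also have "\<dots> \<le> S * T^n' - a n * T^n"
    using b pw \<open>(\<Sum>i\<le>n'. a i * T^n') = S * T^n'\<close> by simp
  also have "\<dots> = - (a n * T^n')"
    unfolding TS[symmetric] n by (simp add: algebra_simps)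
  also have "\<dots> < 0" using an T1 by simp
  finally show ?thesis by blast
qed

lemma neg_pow: "(-1::real)^i * (a * (-x)^i) = a * x^i"
proof -
  have "(-1::real)^i * (-x)^i = x^i" by (simp flip: power_mult_distrib)
  moreover have "(-1::real)^i * (a * (-x)^i) = a * ((-1)^i * (-x)^i)" by (simp only: mult.left_commute)
  ultimately show ?thesis by simp
qed

lemma logconvex_prop:
  assumes pos: "\<forall>i. a i > 0" and lc: "\<forall>i. (a (Suc i))^2 \<le> a i * a (Suc (Suc i))"
  shows "parity_roots_property a"
  unfolding parity_roots_property_def
proof
  fix n
  define p where "p = partial_poly a n"
  have p0pos: "poly p 0 > 0" unfolding p_def poly_pp using pos by (simp add: poly_pos_nonneg)
  have nonneg: "\<And>x. x \<ge> 0 \<Longrightarrow> poly p x > 0"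
    unfolding p_def poly_pp using pos by (intro poly_pos_nonneg) (auto intro: less_imp_le)
  have cfacts: "\<And>t. t > 0 \<Longrightarrow> (\<forall>i. a i * t^i > 0) \<and>
      (\<forall>i. (a (Suc i) * t^(Suc i))^2 \<le> (a i * t^i) * (a (Suc (Suc i)) * t^(Suc (Suc i))))"
  proof -
    fix t :: real assume t: "t > 0"
    have "(a (Suc i) * t^(Suc i))^2 \<le> (a i * t^i) * (a (Suc (Suc i)) * t^(Suc (Suc i)))" for i
    proof -
      have tt: "(t^(Suc i))^2 = t^(Suc i * 2)" by (rule power_mult[symmetric])
      have "Suc i * 2 = 2*i+2" by simp
      then have e1: "(a (Suc i) * t^(Suc i))^2 = (a (Suc i))^2 * t^(2*i+2)"
        using tt by (simp only: power_mult_distrib)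
      have e2: "(a i * t^i) * (a (Suc (Suc i)) * t^(Suc (Suc i))) = (a i * a (Suc (Suc i))) * t^(2*i+2)"
        by (simp add: power_add[symmetric] algebra_simps mult_2_right)
      show ?thesis unfolding e1 e2 using lc t by (intro mult_right_mono) auto
    qed
    then show "(\<forall>i. a i * t^i > 0) \<and>
      (\<forall>i. (a (Suc i) * t^(Suc i))^2 \<le> (a i * t^i) * (a (Suc (Suc i)) * t^(Suc (Suc i))))"
      using pos t by auto
  qed
  have polyneg: "\<And>x. poly p x = (\<Sum>i\<le>n. (-1)^i * (a i * (-x)^i))"
    unfolding p_def poly_pp by (intro sum.cong) (simp_all only: neg_pow)
  show "num_real_roots (partial_poly a n) = n mod 2"
  proof (cases "even n")
    case True
    then obtain k where k: "n = 2*k" by blast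
    have "\<forall>x. poly p x \<noteq> 0"
    proof
      fix x :: real
      show "poly p x \<noteq> 0"
      proof (cases "x \<ge> 0")
        case True then show ?thesis using nonneg[OF True] by simp
      next
        case False
        define c where "c = (\<lambda>i. a i * (-x)^i)"
        have cf: "(\<forall>i. c i > 0) \<and> (\<forall>i. (c (Suc i))^2 \<le> c i * c (Suc (Suc i)))"
          unfolding c_def using cfacts[of "-x"] False by simp
        obtain m where m: "m \<le> n" "\<forall>i<m. c (Suc i) \<le> c i" "\<forall>i. m \<le> i \<and> i < n \<longrightarrow> c i \<le> c (Suc i)"
          using valley_exists[of c n] cf by blast
        have "(\<Sum>i\<le>2*k. (-1)^i * c i) > 0"
          using alt_even[of c m k] m cf k by simp
        then show ?thesis unfolding polyneg c_def k by simp
      qed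
    qed
    moreover have "p \<noteq> 0" using p0pos by auto
    ultimately show ?thesis using no_roots True unfolding p_def by simp
  next
    case False
    then obtain k where k: "n = 2*k+1" using oddE by blast
    obtain b where b: "poly p b < 0" using cauchy_neg[OF pos] False unfolding p_def by blast
    have d: "\<forall>x. poly p x = 0 \<longrightarrow> poly (pderiv p) x > 0"
    proof (intro allI impI)
      fix x assume r: "poly p x = 0"
      have xn: "x < 0"
      proof (rule ccontr)
        assume "\<not> x < 0"
        then have "poly p x > 0" using nonneg by simp
        then show False using r by simp
      qed
      define c where "c = (\<lambda>i. a i * (-x)^i)"
      have cf: "(\<forall>i. c i > 0) \<and> (\<forall>i. (c (Suc i))^2 \<le> c i * c (Suc (Suc i)))"
        unfolding c_def using cfacts[of "-x"] xn by simp
      obtain m where m: "m \<le> n" "\<forall>i<m. c (Suc i) \<le> c i" "\<forall>i. m \<le> i \<and> i < n \<longrightarrow> c i \<le> c (Suc i)"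
        using valley_exists[of c n] cf by blast
      have S: "(\<Sum>i\<le>2*k+1. (-1)^i * ((real m - real i) * c i)) > 0"
        using alt_odd[of c m k] m cf k by simp
      have tw: "(-1)^i * ((real m - real i) * c i) = real m * ((-1)^i * c i) - real i * a i * x^i" for i
      proof -
        have "(-1)^i * ((real m - real i) * c i) = (real m - real i) * ((-1)^i * c i)" by simp
        also have "(-1)^i * c i = a i * x^i" unfolding c_def by (rule neg_pow)
        finally show ?thesis unfolding c_def neg_pow by (simp add: algebra_simps)
      qed
      have "(\<Sum>i\<le>n. (-1)^i * ((real m - real i) * c i))
          = real m * (\<Sum>i\<le>n. (-1)^i * c i) - (\<Sum>i\<le>n. real i * a i * x^i)"
        unfolding tw sum_subtractf sum_distrib_left ..
      also have "\<dots> = real m * poly p x - x * poly (pderiv p) x"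
        using polyneg[of x] poly_pderiv_pp[of x a n] unfolding c_def p_def by simp
      also have "\<dots> = - x * poly (pderiv p) x" using r by simp
      finally have "- x * poly (pderiv p) x > 0" using S k by simp
      then show "poly (pderiv p) x > 0" using xn by (simp add: mult_less_0_iff)
    qed
    have "num_real_roots p = 1" by (rule one_root[OF b p0pos d])
    then show ?thesis unfolding p_def using k by simp
  qed
qed


lemma binom_shift:
  "(1 - x) * (\<Sum>i\<le>n. real ((i + Suc k) choose Suc k) * x^i)
     = (\<Sum>i\<le>n. real ((i + k) choose k) * x^i) - real ((n + Suc k) choose Suc k) * x^(Suc n)"
proof (induction n)
  case 0 then show ?case by simp
next
  case (Suc n)
  have pas: "real ((Suc n + Suc k) choose Suc k) = real ((Suc n + k) choose k) + real ((n + Suc k) choose Suc k)"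
  proof -
    have "Suc n + Suc k = Suc (n + Suc k)" "Suc n + k = n + Suc k" by simp_all
    then show ?thesis by (simp only: binomial_Suc_Suc of_nat_add)
  qed
  have "(1 - x) * (\<Sum>i\<le>Suc n. real ((i + Suc k) choose Suc k) * x^i)
     = (1 - x) * (\<Sum>i\<le>n. real ((i + Suc k) choose Suc k) * x^i)
       + (1 - x) * (real ((Suc n + Suc k) choose Suc k) * x^(Suc n))"
    by (simp add: algebra_simps)
  also have "\<dots> = (\<Sum>i\<le>Suc n. real ((i + k) choose k) * x^i) - real ((Suc n + Suc k) choose Suc k) * x^(Suc (Suc n))"
    unfolding Suc.IH pas by (simp add: algebra_simps)
  finally show ?case .
qed

lemma geo_sum: "(1 - x) * (\<Sum>i\<le>n. x^i) = 1 - (x::real)^(Suc n)"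
  by (rule sum_gp_basic)

lemma binom_even_pos:
  assumes "even n"
  shows "(\<Sum>i\<le>n. real ((i + k) choose k) * x^i) > 0"
proof (cases "x \<ge> 0")
  case True
  then show ?thesis by (intro poly_pos_nonneg) auto
next
  case False
  then have x: "x < 0" by simp
  have xn: "x^(Suc n) < 0"
  proof -
    have "x^n > 0" using assms x by (simp add: zero_less_power_eq)
    then show ?thesis using x by (simp add: mult_neg_pos)
  qed
  show ?thesis
  proof (induction k)
    case 0
    have "(1 - x) * (\<Sum>i\<le>n. real ((i + 0) choose 0) * x^i) > 0"
      using geo_sum[of x n] xn by simp
    then show ?case using x by (simp add: zero_less_mult_iff)
  next
    case (Suc k)
    have "(1 - x) * (\<Sum>i\<le>n. real ((i + Suc k) choose Suc k) * x^i) > 0"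
    proof -
      have "real ((n + Suc k) choose Suc k) * x^(Suc n) \<le> 0"
        using xn by (simp add: mult_nonneg_nonpos)
      then show ?thesis unfolding binom_shift using Suc.IH by linarith
    qed
    then show ?case using x by (simp add: zero_less_mult_iff)
  qed
qed

lemma binom_family: "parity_roots_property (\<lambda>n. real ((n + k) choose k))"
  unfolding parity_roots_property_def
proof
  fix n
  define a where "a = (\<lambda>n. real ((n + k) choose k))"
  define p where "p = partial_poly a n"
  have apos: "\<forall>i. a i > 0" unfolding a_def by simp
  have p0pos: "poly p 0 > 0" unfolding p_def poly_pp a_def by (intro poly_pos_nonneg) auto
  show "num_real_roots (partial_poly (\<lambda>n. real ((n + k) choose k)) n) = n mod 2"
  proof (cases "even n")
    case True
    have "\<forall>x. poly p x \<noteq> 0"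
      using binom_even_pos[OF True, of k] unfolding p_def poly_pp a_def by (metis less_irrefl)
    moreover have "p \<noteq> 0" using p0pos by auto
    ultimately show ?thesis using no_roots True unfolding p_def a_def by simp
  next
    case False
    then obtain n' where n: "n = Suc n'" by (cases n) auto
    have ev: "even n'" using False n by simp
    obtain b where b: "poly p b < 0" using cauchy_neg[OF apos] False unfolding p_def by blast
    have d: "\<forall>x. poly (pderiv p) x > 0"
    proof
      fix x
      have tw: "real (Suc j) * a (Suc j) * x^j = real (Suc k) * (real ((j + Suc k) choose Suc k) * x^j)" for j
      proof -
        have "Suc j * ((Suc j + k) choose k) = Suc k * ((j + Suc k) choose Suc k)"
          using Suc_times_binomial_add[of k j] by (simp add: add.commute)
        then have "real (Suc j) * a (Suc j) = real (Suc k) * real ((j + Suc k) choose Suc k)"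
          unfolding a_def by (metis of_nat_mult)
        then show ?thesis by simp
      qed
      have "poly (pderiv p) x = real (Suc k) * (\<Sum>j\<le>n'. real ((j + Suc k) choose Suc k) * x^j)"
        unfolding p_def n poly_pderiv_pp_Suc tw sum_distrib_left ..
      also have "\<dots> > 0" using binom_even_pos[OF ev, of "Suc k" x] by simp
      finally show "poly (pderiv p) x > 0" .
    qed
    have "num_real_roots p = 1" by (rule one_root[OF b p0pos]) (use d in blast)
    moreover have "n mod 2 = 1" using False by presburger
    ultimately show ?thesis unfolding p_def a_def by simp
  qed
qed


lemma ratio_lc:
  fixes a r :: "nat \<Rightarrow> real"
  assumes a0: "a 0 > 0" and ar: "\<forall>n. a (Suc n) = r n * a n" and rp: "\<forall>n. r n > 0"
    and rm: "\<forall>n. r n \<le> r (Suc n)"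
  shows "parity_roots_property a"
proof (rule logconvex_prop)
  show pos: "\<forall>i. a i > 0"
  proof
    fix i show "a i > 0" by (induction i) (use a0 ar rp in auto)
  qed
  show "\<forall>i. (a (Suc i))^2 \<le> a i * a (Suc (Suc i))"
  proof
    fix i
    have "(a (Suc i))^2 = (r i * r i) * (a i * a i)" using ar by (simp add: power2_eq_square)
    also have "\<dots> \<le> (r i * r (Suc i)) * (a i * a i)"
      using rm rp pos by (intro mult_right_mono mult_left_mono) (auto intro: less_imp_le)
    also have "\<dots> = a i * a (Suc (Suc i))" using ar by simp
    finally show "(a (Suc i))^2 \<le> a i * a (Suc (Suc i))" .
  qed
qed

lemma natA: "(2 * Suc n) choose Suc n = 2 * ((2*n+1) choose n)"
proof -
  have h1: "Suc n * (Suc (2*n+1) choose Suc n) = Suc (2*n+1) * ((2*n+1) choose n)"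
    by (rule Suc_times_binomial)
  have h2: "Suc (2*n+1) * ((2*n+1) choose n) = Suc n * (2 * ((2*n+1) choose n))"
    by (simp del: binomial_Suc_Suc)
  have "Suc (2*n+1) choose Suc n = 2 * ((2*n+1) choose n)"
    using h1 h2 by (metis Suc_neq_Zero mult_left_cancel)
  moreover have "2 * Suc n = Suc (2*n+1)" by simp
  ultimately show ?thesis by metis
qed

lemma natB: "Suc n * ((2*n+1) choose n) = (2*n+1) * ((2*n) choose n)"
proof -
  have "Suc (2*n) * ((2*n) choose n) = (Suc (2*n) choose Suc n) * Suc n"
    by (rule Suc_times_binomial_eq)
  moreover have "Suc (2*n) choose Suc n = (2*n+1) choose n"
    using binomial_symmetric[of "Suc n" "Suc (2*n)"] by simp
  ultimately show ?thesis by (simp add: mult.commute)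
qed

lemma central1_real: "real ((2*n+1) choose n) = real ((2*n) choose n) * ((2*real n+1)/(real n+1))"
proof -
  have "real (Suc n) * real ((2*n+1) choose n) = real (2*n+1) * real ((2*n) choose n)"
    using natB by (metis of_nat_mult)
  then show ?thesis by (simp add: field_simps)
qed

lemma central_rec: "real ((2 * Suc n) choose Suc n) = real ((2*n) choose n) * (2*(2*real n+1)/(real n+1))"
  unfolding natA using central1_real by simp

lemma central1_rec: "real ((2 * Suc n + 1) choose Suc n) = real ((2*n+1) choose n) * (2*(2*real n+3)/(real n+2))"
proof -
  have a: "real ((2*m+1) choose m) = real ((2 * Suc m) choose Suc m) / 2" for m
    unfolding natA by simp
  show ?thesis unfolding a central_rec[of "Suc n"] by (simp add: field_simps)
qed


lemma odd_dfact_Suc: "odd_dfact (Suc n) = odd_dfact n * (2 * n + 1)"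
  unfolding odd_dfact_def by (simp add: prod.cl_ivl_Suc)

lemma even_dfact_Suc: "even_dfact (Suc n) = even_dfact n * (2 * n + 2)"
  unfolding even_dfact_def by (simp add: prod.cl_ivl_Suc)

lemma odd_dfact_0: "odd_dfact 0 = 1" unfolding odd_dfact_def by simp
lemma even_dfact_0: "even_dfact 0 = 1" unfolding even_dfact_def by simp

theorem mainTheorem7:
  shows "(\<forall>k::nat. parity_roots_property (\<lambda>n. real ((n + k) choose k)))
       \<and> parity_roots_property (\<lambda>n. real ((2 * n) choose n) / real (n + 1))
       \<and> parity_roots_property (\<lambda>n. real ((2 * n) choose n))
       \<and> parity_roots_property (\<lambda>n. real ((2 * n + 1) choose n))
       \<and> parity_roots_property (\<lambda>n. real (fact n))
       \<and> parity_roots_property (\<lambda>n. real (odd_dfact n))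
       \<and> parity_roots_property (\<lambda>n. real (even_dfact n))"
proof (intro conjI allI)
  show "parity_roots_property (\<lambda>n. real ((n + k) choose k))" for k by (rule binom_family)
  show "parity_roots_property (\<lambda>n. real ((2 * n) choose n) / real (n + 1))"
  proof (rule ratio_lc[where r = "\<lambda>n. 2*(2*real n+1)/(real n+2)"])
    show "\<forall>n. real (2 * Suc n choose Suc n) / real (Suc n + 1) =
        2 * (2 * real n + 1) / (real n + 2) * (real (2 * n choose n) / real (n + 1))"
      unfolding central_rec by (simp add: field_simps)
    show "\<forall>n. 2 * (2 * real n + 1) / (real n + 2) \<le> 2 * (2 * real (Suc n) + 1) / (real (Suc n) + 2)"
      by (simp add: field_simps)
  qed auto
  show "parity_roots_property (\<lambda>n. real ((2 * n) choose n))"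
  proof (rule ratio_lc[where r = "\<lambda>n. 2*(2*real n+1)/(real n+1)"])
    show "\<forall>n. real (2 * Suc n choose Suc n) = 2 * (2 * real n + 1) / (real n + 1) * real (2 * n choose n)"
      unfolding central_rec by simp
    show "\<forall>n. 2 * (2 * real n + 1) / (real n + 1) \<le> 2 * (2 * real (Suc n) + 1) / (real (Suc n) + 1)"
      by (simp add: field_simps)
  qed auto
  show "parity_roots_property (\<lambda>n. real ((2 * n + 1) choose n))"
  proof (rule ratio_lc[where r = "\<lambda>n. 2*(2*real n+3)/(real n+2)"])
    show "\<forall>n. real (2 * Suc n + 1 choose Suc n) = 2 * (2 * real n + 3) / (real n + 2) * real (2 * n + 1 choose n)"
      unfolding central1_rec by simp
    show "\<forall>n. 2 * (2 * real n + 3) / (real n + 2) \<le> 2 * (2 * real (Suc n) + 3) / (real (Suc n) + 2)"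
      by (simp add: field_simps)
  qed auto
  show "parity_roots_property (\<lambda>n. real (fact n))"
    by (rule ratio_lc[where r = "\<lambda>n. real n + 1"]) (auto simp: algebra_simps)
  show "parity_roots_property (\<lambda>n. real (odd_dfact n))"
    by (rule ratio_lc[where r = "\<lambda>n. 2 * real n + 1"]) (auto simp: odd_dfact_Suc odd_dfact_0 algebra_simps)
  show "parity_roots_property (\<lambda>n. real (even_dfact n))"
    by (rule ratio_lc[where r = "\<lambda>n. 2 * real n + 2"]) (auto simp: even_dfact_Suc even_dfact_0 algebra_simps)
qed

end
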